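(* Let $T=\begin{pmatrix}2^{-1/2}&0.7\\0&2^{-1/2}\end{pmatrix}$, $\mathbf{b}=\begin{pmatrix}1\\1\end{pmatrix}$, $\mathbf{p}=(-2.10,0.20)$, $\mathbf{q}=(4.90,2.45)$. Let $U$ be the open parallelogram with vertices $\pm\mathbf{p},\pm\mathbf{q}$ and $V$ the open parallelogram with vertices $\pm0.95\mathbf{p},\pm0.95\mathbf{q}$. Then \[ \mathbf{v}=T^{-1}\mathbf{b}-T^{-2}\mathbf{b}-T^{-3}\mathbf{b}-T^{-4}\mathbf{b}+T^{-5}\mathbf{b}\in V, \] and \[ U\subset\bigcup_{u\in\{-1,0,1\}^5}(T+u_1\mathbf{b})\circ\cdots\circ(T+u_5\mathbf{b})(V), \] where $T+c\,\mathbf{b}$ denotes the affine map $\mathbf{x}\mapsto T\mathbf{x}+c\,\mathbf{b}$. *)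

theory Defs
  imports "HOL-Analysis.Analysis"
begin

definition Tmat :: "real^2^2" where
  "Tmat = vector [vector [1 / sqrt 2, 0.7], vector [0, 1 / sqrt 2]]"

definition bvec :: "real^2" where "bvec = vector [1, 1]"
definition pvec :: "real^2" where "pvec = vector [-2.10, 0.20]"
definition qvec :: "real^2" where "qvec = vector [4.90, 2.45]"

definition Uset :: "(real^2) set" where
  "Uset = interior (convex hull {pvec, qvec, - pvec, - qvec})"

definition Vset :: "(real^2) set" where
  "Vset = interior (convex hull {0.95 *\<^sub>R pvec, 0.95 *\<^sub>R qvec,
                                 - (0.95 *\<^sub>R pvec), - (0.95 *\<^sub>R qvec)})"

definition affT :: "real \<Rightarrow> real^2 \<Rightarrow> real^2" where
  "affT c x = Tmat *v x + c *\<^sub>R bvec"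

definition Tinv_pow :: "nat \<Rightarrow> real^2 \<Rightarrow> real^2" where
  "Tinv_pow k x = (((*v) (matrix_inv Tmat)) ^^ k) x"

end

theory Submission
  imports Defs
begin


abbreviation rr :: real where "rr \<equiv> sqrt 2"

lemma rr_sq: "rr * rr = 2" by simp
lemma rr_lo: "14142135623 / 10000000000 < rr"
  by (rule real_less_rsqrt) (simp add: power2_eq_square)
lemma rr_hi: "rr < 14142135624 / 10000000000"
proof -
  have "sqrt 2 < sqrt ((14142135624 / 10000000000)^2)" by (rule real_sqrt_less_mono) (simp add: power_divide)
  then show ?thesis by simp
qed
lemma rr_sq2[simp]: "rr * (rr * x) = 2 * x" by (simp flip: mult.assoc)

definition sg :: "real^2 \<Rightarrow> real" where "sg x = (-18 * x$1 + 56 * x$2)/49"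
definition dl :: "real^2 \<Rightarrow> real" where "dl x = (-106 * x$1 + 112 * x$2)/245"
definition tinv :: "real \<Rightarrow> real^2 \<Rightarrow> real^2" where
  "tinv c z = vector [rr * (z$1 - c) - 7/5 * (z$2 - c), rr * (z$2 - c)]"

lemma Tmv: "Tmat *v z = vector [z$1 / rr + 7/10 * z$2, z$2 / rr]"
  by (simp add: Tmat_def vec_eq_iff forall_2 matrix_vector_mult_def sum_2)

lemma affT_tinv: "affT c (tinv c z) = z"
  by (simp add: affT_def Tmv tinv_def bvec_def vec_eq_iff forall_2 field_simps)


definition KA :: "real \<Rightarrow> real \<Rightarrow> real" where "KA a d = (477/35 + 4*rr)*a - 81/7*d"
definition KB :: "real \<Rightarrow> real \<Rightarrow> real" where "KB a d = 2809/175*a + (-477/35 + 4*rr)*d"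
definition tA1 :: "int \<Rightarrow> int \<Rightarrow> int \<Rightarrow> int \<Rightarrow> int \<Rightarrow> int" where
  "tA1 u1 u2 u3 u4 u5 = 50400*u1+15200*u2+15120*u3+7600*u4+2520*u5"
definition tB1 :: "int \<Rightarrow> int \<Rightarrow> int \<Rightarrow> int \<Rightarrow> int \<Rightarrow> int" where
  "tB1 u1 u2 u3 u4 u5 = 15200*u1+20160*u2+7600*u3+5040*u4+3800*u5"
definition tA2 :: "int \<Rightarrow> int \<Rightarrow> int \<Rightarrow> int \<Rightarrow> int \<Rightarrow> int" where
  "tA2 u1 u2 u3 u4 u5 = 59360*u1+480*u2+17808*u3+240*u4+2968*u5"
definition tB2 :: "int \<Rightarrow> int \<Rightarrow> int \<Rightarrow> int \<Rightarrow> int \<Rightarrow> int" where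
  "tB2 u1 u2 u3 u4 u5 = 480*u1+23744*u2+240*u3+5936*u4+120*u5"

definition ychain :: "int \<Rightarrow> int \<Rightarrow> int \<Rightarrow> int \<Rightarrow> int \<Rightarrow> real^2 \<Rightarrow> real^2" where
  "ychain u1 u2 u3 u4 u5 x = tinv (of_int u5) (tinv (of_int u4) (tinv (of_int u3) (tinv (of_int u2) (tinv (of_int u1) x))))"

lemma sg_y: "sg (ychain u1 u2 u3 u4 u5 x) = KA (sg x) (dl x)
   - (of_int (tA1 u1 u2 u3 u4 u5) + of_int (tB1 u1 u2 u3 u4 u5) * rr) / 4900"
  by (simp add: ychain_def tinv_def sg_def dl_def KA_def tA1_def tB1_def field_simps)

lemma dl_y: "dl (ychain u1 u2 u3 u4 u5 x) = KB (sg x) (dl x)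
   - (of_int (tA2 u1 u2 u3 u4 u5) + of_int (tB2 u1 u2 u3 u4 u5) * rr) / 4900"
  by (simp add: ychain_def tinv_def sg_def dl_def KB_def tA2_def tB2_def field_simps)

lemma comp_y: "(affT (of_int u1) \<circ> affT (of_int u2) \<circ> affT (of_int u3) \<circ> affT (of_int u4) \<circ> affT (of_int u5)) (ychain u1 u2 u3 u4 u5 x) = x"
  by (simp add: ychain_def affT_tinv)


lemma abs_comb: fixes A B u v :: real
  assumes "0 \<le> u" "0 \<le> v" "u + v = 1" "\<bar>A\<bar> \<le> 1" "\<bar>B\<bar> \<le> 1"
  shows "\<bar>u * A + v * B\<bar> \<le> 1"
proof -
  have "\<bar>u * A + v * B\<bar> \<le> \<bar>u * A\<bar> + \<bar>v * B\<bar>" by (rule abs_triangle_ineq)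
  also have "\<dots> = u * \<bar>A\<bar> + v * \<bar>B\<bar>" using assms by (simp add: abs_mult)
  also have "\<dots> \<le> u * 1 + v * 1" using assms by (intro add_mono mult_left_mono) auto
  finally show ?thesis using assms by simp
qed

lemma convex_box: "convex {x::real^2. \<bar>sg x\<bar> \<le> 1 \<and> \<bar>dl x\<bar> \<le> 1}"
proof (unfold convex_def, safe)
  fix x y :: "real^2" and u v :: real
  assume h: "\<bar>sg x\<bar> \<le> 1" "\<bar>dl x\<bar> \<le> 1" "\<bar>sg y\<bar> \<le> 1" "\<bar>dl y\<bar> \<le> 1" "0 \<le> u" "0 \<le> v" "u + v = 1"
  have "sg (u *\<^sub>R x + v *\<^sub>R y) = u * sg x + v * sg y" by (simp add: sg_def field_simps)
  then show "\<bar>sg (u *\<^sub>R x + v *\<^sub>R y)\<bar> \<le> 1" using abs_comb h by simp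
  have "dl (u *\<^sub>R x + v *\<^sub>R y) = u * dl x + v * dl y" by (simp add: dl_def field_simps)
  then show "\<bar>dl (u *\<^sub>R x + v *\<^sub>R y)\<bar> \<le> 1" using abs_comb h by simp
qed

lemma U_sub: "Uset \<subseteq> {x. \<bar>sg x\<bar> \<le> 1 \<and> \<bar>dl x\<bar> \<le> 1}"
proof -
  have "convex hull {pvec, qvec, - pvec, - qvec} \<subseteq> {x. \<bar>sg x\<bar> \<le> 1 \<and> \<bar>dl x\<bar> \<le> 1}"
  proof (rule hull_minimal)
    show "{pvec, qvec, - pvec, - qvec} \<subseteq> {x. \<bar>sg x\<bar> \<le> 1 \<and> \<bar>dl x\<bar> \<le> 1}"
      by (auto simp: pvec_def qvec_def sg_def dl_def)
  qed (rule convex_box)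
  then show ?thesis unfolding Uset_def using interior_subset by blast
qed

lemma open_box: "open {x::real^2. \<bar>sg x\<bar> < 19/20 \<and> \<bar>dl x\<bar> < 19/20}"
  unfolding sg_def dl_def
  by (intro open_Collect_conj open_Collect_less continuous_intros) auto

lemma box_hull: assumes "\<bar>sg x\<bar> < 19/20" "\<bar>dl x\<bar> < 19/20"
  shows "x \<in> convex hull {0.95 *\<^sub>R pvec, 0.95 *\<^sub>R qvec, - (0.95 *\<^sub>R pvec), - (0.95 *\<^sub>R qvec)}"
    (is "_ \<in> ?H")
proof -
  define P where "P = 0.95 *\<^sub>R pvec"
  define Q where "Q = 0.95 *\<^sub>R qvec"
  define s' where "s' = sg x / 0.95"
  define d' where "d' = dl x / 0.95"
  have cv: "convex ?H" by (rule convex_convex_hull)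
  have inP: "P \<in> ?H" "Q \<in> ?H" "-P \<in> ?H" "-Q \<in> ?H" unfolding P_def Q_def by (auto intro: hull_inc)
  have s1: "\<bar>s'\<bar> \<le> 1" "\<bar>d'\<bar> \<le> 1" using assms by (auto simp: s'_def d'_def)
  define X1 where "X1 = ((1+d')/2) *\<^sub>R P + ((1-d')/2) *\<^sub>R Q"
  define X2 where "X2 = ((1+d')/2) *\<^sub>R (-Q) + ((1-d')/2) *\<^sub>R (-P)"
  have "X1 \<in> ?H" unfolding X1_def apply (intro convexD[OF cv] inP) using s1 by (simp_all add: abs_le_iff field_simps)
  moreover have "X2 \<in> ?H" unfolding X2_def apply (intro convexD[OF cv] inP) using s1 by (simp_all add: abs_le_iff field_simps)
  ultimately have "((1+s')/2) *\<^sub>R X1 + ((1-s')/2) *\<^sub>R X2 \<in> ?H"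
    apply (intro convexD[OF cv]) using s1 by (simp_all add: abs_le_iff field_simps)
  moreover have "((1+s')/2) *\<^sub>R X1 + ((1-s')/2) *\<^sub>R X2 = x"
    by (simp add: X1_def X2_def P_def Q_def s'_def d'_def sg_def dl_def pvec_def qvec_def
        vec_eq_iff forall_2 field_simps) 
  ultimately show ?thesis by simp
qed

lemma V_sup: "{x. \<bar>sg x\<bar> < 19/20 \<and> \<bar>dl x\<bar> < 19/20} \<subseteq> Vset"
  unfolding Vset_def using box_hull open_box by (intro interior_maximal) auto

datatype ct = Lf int int int int int | Out | Nd ct ct

definition nchk :: "int \<Rightarrow> int \<Rightarrow> bool" where
  "nchk A B = (if 0 \<le> B then A * 10000000000 + B * 14142135624 < 0 else A * 10000000000 + B * 14142135623 < 0)"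
definition dig :: "int \<Rightarrow> bool" where "dig u = (-1 \<le> u \<and> u \<le> 1)"
definition leafok :: "int \<Rightarrow> int \<Rightarrow> int \<Rightarrow> int \<Rightarrow> int \<Rightarrow> int \<Rightarrow> int \<Rightarrow> int \<Rightarrow> int \<Rightarrow> bool" where
  "leafok u1 u2 u3 u4 u5 i0 i1 j0 j1 = (dig u1 \<and> dig u2 \<and> dig u3 \<and> dig u4 \<and> dig u5 \<and>
     (let a = tA1 u1 u2 u3 u4 u5; b = tB1 u1 u2 u3 u4 u5; c = tA2 u1 u2 u3 u4 u5; d = tB2 u1 u2 u3 u4 u5 in
     nchk (1024*a - 4655*1024 - 4900*i0) (1024*b) \<and> nchk (4900*i1 - 1024*a - 4655*1024) (-(1024*b)) \<and>
     nchk (1024*c - 4655*1024 - 4900*j0) (1024*d) \<and> nchk (4900*j1 - 1024*c - 4655*1024) (-(1024*d))))"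
definition gA1 :: "int \<Rightarrow> int \<Rightarrow> bool" where "gA1 i j = nchk (1120*1024+477*i-405*j) (-140*i)"
definition gA2 :: "int \<Rightarrow> int \<Rightarrow> bool" where "gA2 i j = nchk (1120*1024-477*i+405*j) (140*i)"
definition gB1 :: "int \<Rightarrow> int \<Rightarrow> bool" where "gB1 i j = nchk (5600*1024+2809*i-2385*j) (-700*j)"
definition gB2 :: "int \<Rightarrow> int \<Rightarrow> bool" where "gB2 i j = nchk (5600*1024-2809*i+2385*j) (700*j)"
definition allc :: "(int \<Rightarrow> int \<Rightarrow> bool) \<Rightarrow> int \<Rightarrow> int \<Rightarrow> int \<Rightarrow> int \<Rightarrow> bool" where
  "allc g i0 i1 j0 j1 = (g i0 j0 \<and> g i0 j1 \<and> g i1 j0 \<and> g i1 j1)"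
definition outok :: "int \<Rightarrow> int \<Rightarrow> int \<Rightarrow> int \<Rightarrow> bool" where
  "outok i0 i1 j0 j1 = (allc gA1 i0 i1 j0 j1 \<or> allc gA2 i0 i1 j0 j1 \<or> allc gB1 i0 i1 j0 j1 \<or> allc gB2 i0 i1 j0 j1)"
fun check :: "ct \<Rightarrow> int \<Rightarrow> int \<Rightarrow> int \<Rightarrow> int \<Rightarrow> bool" where
  "check (Lf u1 u2 u3 u4 u5) i0 i1 j0 j1 = leafok u1 u2 u3 u4 u5 i0 i1 j0 j1"
| "check Out i0 i1 j0 j1 = outok i0 i1 j0 j1"
| "check (Nd l r) i0 i1 j0 j1 = (if j1 - j0 \<le> i1 - i0
     then check l i0 ((i0+i1) div 2) j0 j1 \<and> check r ((i0+i1) div 2) i1 j0 j1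
     else check l i0 i1 j0 ((j0+j1) div 2) \<and> check r i0 i1 ((j0+j1) div 2) j1)"

lemma nchk_sound: assumes "nchk A B" shows "real_of_int A + real_of_int B * rr < 0"
proof (cases "0 \<le> B")
  case True
  then have "A * 10000000000 + B * 14142135624 < 0" using assms by (simp add: nchk_def)
  then have h: "real_of_int A * 10000000000 + real_of_int B * 14142135624 < 0"
    by (metis (mono_tags, opaque_lifting) of_int_add of_int_less_0_iff of_int_mult of_int_numeral)
  have "real_of_int B * rr \<le> real_of_int B * (14142135624 / 10000000000)"
    using True rr_hi by (intro mult_left_mono) auto
  then show ?thesis using h by simp
next
  case False
  then have "A * 10000000000 + B * 14142135623 < 0" using assms by (simp add: nchk_def)
  then have h: "real_of_int A * 10000000000 + real_of_int B * 14142135623 < 0"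
    by (metis (mono_tags, opaque_lifting) of_int_add of_int_less_0_iff of_int_mult of_int_numeral)
  have "real_of_int B * rr \<le> real_of_int B * (14142135623 / 10000000000)"
    using False rr_lo by (intro mult_left_mono_neg) auto
  then show ?thesis using h by simp
qed

lemma aff_box:
  fixes c0 c1 c2 a0 a1 b0 b1 a b :: real
  assumes "c0 + c1 * a0 + c2 * b0 < 0" "c0 + c1 * a0 + c2 * b1 < 0"
    "c0 + c1 * a1 + c2 * b0 < 0" "c0 + c1 * a1 + c2 * b1 < 0"
    "a0 \<le> a" "a \<le> a1" "b0 \<le> b" "b \<le> b1"
  shows "c0 + c1 * a + c2 * b < 0"
proof -
  have ha: "c1 * a \<le> c1 * a0 \<or> c1 * a \<le> c1 * a1"
  proof (cases "0 \<le> c1")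
    case True then show ?thesis using assms mult_left_mono by blast
  next
    case False then show ?thesis using assms mult_left_mono_neg[of a0 a c1] by auto
  qed
  have hb: "c2 * b \<le> c2 * b0 \<or> c2 * b \<le> c2 * b1"
  proof (cases "0 \<le> c2")
    case True then show ?thesis using assms mult_left_mono by blast
  next
    case False then show ?thesis using assms mult_left_mono_neg[of b0 b c2] by auto
  qed
  show ?thesis using ha hb assms(1-4) by linarith
qed

definition tau1 :: "int \<Rightarrow> int \<Rightarrow> int \<Rightarrow> int \<Rightarrow> int \<Rightarrow> real" where
  "tau1 u1 u2 u3 u4 u5 = (of_int (tA1 u1 u2 u3 u4 u5) + of_int (tB1 u1 u2 u3 u4 u5) * rr) / 4900"
definition tau2 :: "int \<Rightarrow> int \<Rightarrow> int \<Rightarrow> int \<Rightarrow> int \<Rightarrow> real" where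
  "tau2 u1 u2 u3 u4 u5 = (of_int (tA2 u1 u2 u3 u4 u5) + of_int (tB2 u1 u2 u3 u4 u5) * rr) / 4900"

definition good :: "real \<Rightarrow> real \<Rightarrow> bool" where
  "good a b = (\<exists>u1 u2 u3 u4 u5. dig u1 \<and> dig u2 \<and> dig u3 \<and> dig u4 \<and> dig u5 \<and>
      \<bar>a - tau1 u1 u2 u3 u4 u5\<bar> < 19/20 \<and> \<bar>b - tau2 u1 u2 u3 u4 u5\<bar> < 19/20)"

lemma leaf_sound:
  assumes "leafok u1 u2 u3 u4 u5 i0 i1 j0 j1"
    "of_int i0 / 1024 \<le> a" "a \<le> of_int i1 / 1024" "of_int j0 / 1024 \<le> b" "b \<le> of_int j1 / 1024"
  shows "good a b"
proof -
  let ?A = "tA1 u1 u2 u3 u4 u5" and ?B = "tB1 u1 u2 u3 u4 u5"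
  let ?C = "tA2 u1 u2 u3 u4 u5" and ?D = "tB2 u1 u2 u3 u4 u5"
  have d: "dig u1" "dig u2" "dig u3" "dig u4" "dig u5" using assms(1) by (auto simp: leafok_def)
  have n: "nchk (1024*?A - 4655*1024 - 4900*i0) (1024*?B)" "nchk (4900*i1 - 1024*?A - 4655*1024) (-(1024*?B))"
     "nchk (1024*?C - 4655*1024 - 4900*j0) (1024*?D)" "nchk (4900*j1 - 1024*?C - 4655*1024) (-(1024*?D))"
    using assms(1) by (auto simp: leafok_def Let_def)
  note m = n[THEN nchk_sound]
  have "\<bar>a - tau1 u1 u2 u3 u4 u5\<bar> < 19/20" using m(1,2) assms(2,3) by (simp add: tau1_def abs_less_iff field_simps)
  moreover have "\<bar>b - tau2 u1 u2 u3 u4 u5\<bar> < 19/20" using m(3,4) assms(4,5) by (simp add: tau2_def abs_less_iff field_simps)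
  ultimately show ?thesis using d unfolding good_def by blast
qed

lemma gA1_sound: "gA1 i j \<Longrightarrow> 1120 + (477 - 140*rr) * (of_int i / 1024) + (-405) * (of_int j / 1024) < 0"
  unfolding gA1_def by (drule nchk_sound) (simp add: field_simps)
lemma gA2_sound: "gA2 i j \<Longrightarrow> 1120 + (-477 + 140*rr) * (of_int i / 1024) + 405 * (of_int j / 1024) < 0"
  unfolding gA2_def by (drule nchk_sound) (simp add: field_simps)
lemma gB1_sound: "gB1 i j \<Longrightarrow> 5600 + 2809 * (of_int i / 1024) + (-2385 - 700*rr) * (of_int j / 1024) < 0"
  unfolding gB1_def by (drule nchk_sound) (simp add: field_simps)
lemma gB2_sound: "gB2 i j \<Longrightarrow> 5600 + (-2809) * (of_int i / 1024) + (2385 + 700*rr) * (of_int j / 1024) < 0"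
  unfolding gB2_def by (drule nchk_sound) (simp add: field_simps)

lemma idA1: "1120 + (477 - 140*rr) * KA s d + (-405) * KB s d = 1120 * (1 - s)"
  by (simp add: KA_def KB_def field_simps)
lemma idA2: "1120 + (-477 + 140*rr) * KA s d + 405 * KB s d = 1120 * (1 + s)"
  by (simp add: KA_def KB_def field_simps)
lemma idB1: "5600 + 2809 * KA s d + (-2385 - 700*rr) * KB s d = 5600 * (1 - d)"
  by (simp add: KA_def KB_def field_simps)
lemma idB2: "5600 + (-2809) * KA s d + (2385 + 700*rr) * KB s d = 5600 * (1 + d)"
  by (simp add: KA_def KB_def field_simps)

lemma out_sound:
  assumes "outok i0 i1 j0 j1"
    "of_int i0 / 1024 \<le> a" "a \<le> of_int i1 / 1024" "of_int j0 / 1024 \<le> b" "b \<le> of_int j1 / 1024"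
    "\<bar>s\<bar> \<le> 1" "\<bar>d\<bar> \<le> 1" "a = KA s d" "b = KB s d"
  shows False
  using assms(1) unfolding outok_def allc_def
proof (elim disjE conjE)
  assume h: "gA1 i0 j0" "gA1 i0 j1" "gA1 i1 j0" "gA1 i1 j1"
  have "1120 + (477 - 140*rr) * a + (-405) * b < 0"
    by (rule aff_box[OF h[THEN gA1_sound] assms(2-5)])
  then show False using assms(6-9) idA1[of s d] by (simp add: abs_le_iff)
next
  assume h: "gA2 i0 j0" "gA2 i0 j1" "gA2 i1 j0" "gA2 i1 j1"
  have "1120 + (-477 + 140*rr) * a + 405 * b < 0"
    by (rule aff_box[OF h[THEN gA2_sound] assms(2-5)])
  then show False using assms(6-9) idA2[of s d] by (simp add: abs_le_iff)
next
  assume h: "gB1 i0 j0" "gB1 i0 j1" "gB1 i1 j0" "gB1 i1 j1"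
  have "5600 + 2809 * a + (-2385 - 700*rr) * b < 0"
    by (rule aff_box[OF h[THEN gB1_sound] assms(2-5)])
  then show False using assms(6-9) idB1[of s d] by (simp add: abs_le_iff)
next
  assume h: "gB2 i0 j0" "gB2 i0 j1" "gB2 i1 j0" "gB2 i1 j1"
  have "5600 + (-2809) * a + (2385 + 700*rr) * b < 0"
    by (rule aff_box[OF h[THEN gB2_sound] assms(2-5)])
  then show False using assms(6-9) idB2[of s d] by (simp add: abs_le_iff)
qed

lemma check_sound:
  assumes "check t i0 i1 j0 j1"
    "of_int i0 / 1024 \<le> a" "a \<le> of_int i1 / 1024" "of_int j0 / 1024 \<le> b" "b \<le> of_int j1 / 1024"
    "\<bar>s\<bar> \<le> 1" "\<bar>d\<bar> \<le> 1" "a = KA s d" "b = KB s d"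
  shows "good a b"
  using assms(1-5)
proof (induction t arbitrary: i0 i1 j0 j1)
  case (Lf u1 u2 u3 u4 u5)
  then show ?case using leaf_sound by simp
next
  case Out
  then have False using out_sound[of i0 i1 j0 j1 a b s d] assms(6-9) by simp
  then show ?case ..
next
  case (Nd l r)
  show ?case
  proof (cases "j1 - j0 \<le> i1 - i0")
    case True
    let ?m = "(i0 + i1) div 2"
    have c: "check l i0 ?m j0 j1" "check r ?m i1 j0 j1" using Nd.prems(1) True by auto
    show ?thesis
    proof (cases "a \<le> of_int ?m / 1024")
      case True then show ?thesis using Nd.IH(1)[OF c(1)] Nd.prems by simp
    next
      case False then show ?thesis using Nd.IH(2)[OF c(2)] Nd.prems by simp
    qed
  next
    case False
    let ?m = "(j0 + j1) div 2"
    have c: "check l i0 i1 j0 ?m" "check r i0 i1 ?m j1" using Nd.prems(1) False by auto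
    show ?thesis
    proof (cases "b \<le> of_int ?m / 1024")
      case True then show ?thesis using Nd.IH(1)[OF c(1)] Nd.prems by simp
    next
      case False then show ?thesis using Nd.IH(2)[OF c(2)] Nd.prems by simp
    qed
  qed
qed

definition Ti :: "real^2^2" where "Ti = vector [vector [rr, -7/5], vector [0, rr]]"

lemma Tmat_Ti: "Tmat ** Ti = mat 1"
  by (simp add: Tmat_def Ti_def vec_eq_iff forall_2 matrix_matrix_mult_def sum_2 mat_def field_simps)
lemma Ti_Tmat: "Ti ** Tmat = mat 1"
  by (simp add: Tmat_def Ti_def vec_eq_iff forall_2 matrix_matrix_mult_def sum_2 mat_def field_simps)

lemma matrix_inv_T: "matrix_inv Tmat = Ti"
proof -
  have ex: "\<exists>A'. Tmat ** A' = mat 1 \<and> A' ** Tmat = mat 1" using Tmat_Ti Ti_Tmat by blast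
  define A' where "A' = matrix_inv Tmat"
  have h: "Tmat ** A' = mat 1 \<and> A' ** Tmat = mat 1"
    unfolding A'_def matrix_inv_def by (rule someI_ex[OF ex])
  have "A' = A' ** (Tmat ** Ti)" by (simp add: Tmat_Ti)
  also have "\<dots> = (A' ** Tmat) ** Ti" by (simp add: matrix_mul_assoc)
  also have "\<dots> = Ti" using h by simp
  finally show ?thesis unfolding A'_def .
qed

lemma Ti_mv: "Ti *v z = tinv 0 z"
  by (simp add: Ti_def tinv_def vec_eq_iff forall_2 matrix_vector_mult_def sum_2)

lemma Tinv_pow_eq: "Tinv_pow k z = (tinv 0 ^^ k) z"
proof -
  have "((*v) (matrix_inv Tmat)) = tinv 0" by (rule ext) (simp add: matrix_inv_T Ti_mv)
  then show ?thesis by (simp add: Tinv_pow_def)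
qed

lemma v_in_V: "Tinv_pow 1 bvec - Tinv_pow 2 bvec - Tinv_pow 3 bvec - Tinv_pow 4 bvec
           + Tinv_pow 5 bvec \<in> Vset"
proof -
  let ?v = "Tinv_pow 1 bvec - Tinv_pow 2 bvec - Tinv_pow 3 bvec - Tinv_pow 4 bvec + Tinv_pow 5 bvec"
  have e: "?v = vector [17 * rr - 27, 3 * rr - 6]"
    by (simp add: Tinv_pow_eq numeral_eq_Suc tinv_def bvec_def vec_eq_iff forall_2 field_simps)
  let ?w = "vector [17 * rr - 27, 3 * rr - 6] :: real^2"
  have "sg ?w = (150 - 138 * rr) / 49" by (simp add: sg_def field_simps)
  moreover have "dl ?w = (2190 - 1466 * rr) / 245" by (simp add: dl_def field_simps)
  ultimately have "\<bar>sg ?w\<bar> < 19/20 \<and> \<bar>dl ?w\<bar> < 19/20" using rr_lo rr_hi by (simp add: abs_less_iff)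
  then show ?thesis unfolding e using V_sup by blast
qed

lemma abs_lin: fixes c e s d :: real assumes "\<bar>s\<bar> \<le> 1" "\<bar>d\<bar> \<le> 1"
  shows "\<bar>c * s + e * d\<bar> \<le> \<bar>c\<bar> + \<bar>e\<bar>"
proof -
  have "\<bar>c * s + e * d\<bar> \<le> \<bar>c\<bar> * \<bar>s\<bar> + \<bar>e\<bar> * \<bar>d\<bar>" by (metis abs_mult abs_triangle_ineq)
  also have "\<dots> \<le> \<bar>c\<bar> * 1 + \<bar>e\<bar> * 1" using assms by (intro add_mono mult_left_mono) auto
  finally show ?thesis by simp
qed

lemma KA_bnd: "\<bar>s\<bar> \<le> 1 \<Longrightarrow> \<bar>d\<bar> \<le> 1 \<Longrightarrow> \<bar>KA s d\<bar> \<le> 31"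
  using abs_lin[of s d "477/35 + 4*rr" "-81/7"] rr_lo rr_hi unfolding KA_def by (simp add: abs_le_iff)
lemma KB_bnd: "\<bar>s\<bar> \<le> 1 \<Longrightarrow> \<bar>d\<bar> \<le> 1 \<Longrightarrow> \<bar>KB s d\<bar> \<le> 25"
  using abs_lin[of s d "2809/175" "-477/35 + 4*rr"] rr_lo rr_hi unfolding KB_def by (simp add: abs_le_iff)

lemma dig_real: "dig u \<Longrightarrow> real_of_int u \<in> {-1,0,1}"
proof -
  assume "dig u"
  then have "u = -1 \<or> u = 0 \<or> u = 1" unfolding dig_def by arith
  then show ?thesis by auto
qed

lemma cover_pt:
  assumes big: "check tr (-31744) 31744 (-25600) 25600" and x: "x \<in> Uset"
  shows "x \<in> (\<Union>u1\<in>{-1,0,1}. \<Union>u2\<in>{-1,0,1}. \<Union>u3\<in>{-1,0,1}. \<Union>u4\<in>{-1,0,1}.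
                      \<Union>u5\<in>{-1,0,1}.
                        (affT u1 \<circ> affT u2 \<circ> affT u3 \<circ> affT u4 \<circ> affT u5) ` Vset)"
proof -
  define s where "s = sg x"
  define d where "d = dl x"
  have sd: "\<bar>s\<bar> \<le> 1" "\<bar>d\<bar> \<le> 1" using U_sub x unfolding s_def d_def by auto
  have ba: "\<bar>KA s d\<bar> \<le> 31" "\<bar>KB s d\<bar> \<le> 25" using KA_bnd KB_bnd sd by auto
  have "good (KA s d) (KB s d)"
    by (rule check_sound[OF big _ _ _ _ sd refl refl]) (use ba in \<open>simp_all add: abs_le_iff\<close>)
  then obtain u1 u2 u3 u4 u5 where du: "dig u1" "dig u2" "dig u3" "dig u4" "dig u5"
    and t1: "\<bar>KA s d - tau1 u1 u2 u3 u4 u5\<bar> < 19/20" and t2: "\<bar>KB s d - tau2 u1 u2 u3 u4 u5\<bar> < 19/20"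
    unfolding good_def by blast
  define y where "y = ychain u1 u2 u3 u4 u5 x"
  have "sg y = KA s d - tau1 u1 u2 u3 u4 u5" unfolding y_def s_def d_def tau1_def by (rule sg_y)
  moreover have "dl y = KB s d - tau2 u1 u2 u3 u4 u5" unfolding y_def s_def d_def tau2_def by (rule dl_y)
  ultimately have yV: "y \<in> Vset" using t1 t2 V_sup by auto
  have xe: "x = (affT (of_int u1) \<circ> affT (of_int u2) \<circ> affT (of_int u3) \<circ> affT (of_int u4) \<circ> affT (of_int u5)) y"
    unfolding y_def by (rule comp_y[symmetric])
  note r = du[THEN dig_real]
  show ?thesis
    by (rule UN_I[OF r(1)], rule UN_I[OF r(2)], rule UN_I[OF r(3)], rule UN_I[OF r(4)], rule UN_I[OF r(5)])
      (rule image_eqI[where f="affT (of_int u1) \<circ> affT (of_int u2) \<circ> affT (of_int u3) \<circ> affT (of_int u4) \<circ> affT (of_int u5)" and x=y, OF xe yV])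
qed

definition bigtree :: ct where
  "bigtree = (Nd ((Nd ((Nd ((Nd ((Nd ((Nd ((Nd ((Nd ((Nd ((Nd ((Nd ((Nd (Out) (Lf (-1) (-1) (-1) (0) (-1)))) ((Nd
    (Out) ((Nd (Lf (-1) (-1) (-1) (-1) (1)) (Out))))))) ((Nd ((Nd (Lf (-1) (-1) (-1) (0) (-1)) (Out)))
    ((Nd ((Nd (Lf (-1) (-1) (-1) (0) (-1)) (Lf (-1) (-1) (-1) (0) (0)))) ((Nd (Out) ((Nd (Lf (-1) (-1)
    (-1) (0) (0)) (Out))))))))))) ((Nd (Out) ((Nd ((Nd (Lf (-1) (-1) (-1) (0) (0)) ((Nd ((Nd (Lf (-1)
    (-1) (-1) (0) (0)) (Lf (-1) (-1) (0) (-1) (-1)))) ((Nd (Lf (-1) (-1) (-1) (0) (0)) (Lf (-1) (-1) (0)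
    (-1) (-1)))))))) ((Nd (Out) (Lf (-1) (-1) (-1) (0) (1)))))))))) ((Nd (Out) ((Nd ((Nd ((Nd (Lf (-1)
    (-1) (0) (-1) (-1)) (Out))) ((Nd (Lf (-1) (-1) (-1) (1) (-1)) ((Nd (Out) ((Nd ((Nd (Out) (Lf (-1)
    (-1) (0) (-1) (0)))) (Out))))))))) (Out))))))) ((Nd (Out) ((Nd ((Nd ((Nd (Lf (-1) (-1) (0) (-1) (0))
    (Lf (-1) (-1) (-1) (1) (0)))) ((Nd ((Nd ((Nd (Out) ((Nd ((Nd ((Nd (Lf (-1) (-1) (0) (-1) (0))
    (Out))) ((Nd (Lf (-1) (-1) (0) (-1) (0)) ((Nd (Out) ((Nd (Lf (-1) (-1) (0) (-1) (0)) (Out)))))))))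
    (Out))))) (Out))) ((Nd ((Nd ((Nd ((Nd ((Nd (Lf (-1) (-1) (0) (-1) (0)) ((Nd ((Nd (Lf (-1) (-1) (0)
    (-1) (0)) ((Nd (Out) (Lf (-1) (-1) (0) (0) (-1)))))) (Lf (-1) (-1) (0) (0) (-1)))))) (Lf (-1) (-1)
    (0) (0) (-1)))) ((Nd ((Nd ((Nd (Out) (Lf (-1) (-1) (0) (0) (-1)))) (Out))) (Lf (-1) (-1) (0) (0)
    (-1)))))) (Lf (-1) (-1) (0) (0) (-1)))) ((Nd (Out) ((Nd (Lf (-1) (-1) (0) (0) (-1)) (Out)))))))))))
    ((Nd (Out) ((Nd ((Nd (Lf (-1) (-1) (0) (-1) (1)) ((Nd ((Nd (Lf (-1) (-1) (0) (0) (-1)) (Lf (-1) (0)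
    (-1) (-1) (-1)))) ((Nd ((Nd (Lf (-1) (-1) (0) (0) (-1)) (Lf (-1) (-1) (0) (0) (0)))) (Lf (-1) (0)
    (-1) (-1) (-1)))))))) ((Nd (Out) (Lf (-1) (-1) (0) (0) (0)))))))))))))) ((Nd (Out) ((Nd ((Nd (Out)
    ((Nd ((Nd ((Nd (Lf (-1) (0) (-1) (-1) (-1)) (Out))) ((Nd ((Nd (Lf (-1) (0) (-1) (-1) (-1)) (Lf (-1)
    (-1) (1) (-1) (-1)))) ((Nd (Out) (Lf (-1) (0) (-1) (-1) (0)))))))) (Out))))) (Out))))))) ((Nd ((Nd
    ((Nd (Out) ((Nd ((Nd (Out) ((Nd ((Nd (Out) ((Nd (Lf (-1) (-1) (0) (0) (0)) (Out))))) (Out)))))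
    (Out))))) (Out))) ((Nd ((Nd ((Nd ((Nd ((Nd (Lf (-1) (-1) (1) (-1) (-1)) (Lf (-1) (-1) (0) (1)
    (-1)))) ((Nd ((Nd ((Nd (Out) ((Nd (Lf (-1) (0) (-1) (-1) (0)) (Out))))) (Out))) ((Nd (Lf (-1) (0)
    (-1) (0) (-1)) ((Nd (Out) ((Nd (Lf (-1) (0) (-1) (0) (-1)) (Out))))))))))) ((Nd ((Nd ((Nd (Out) (Lf
    (-1) (-1) (0) (1) (0)))) (Out))) ((Nd ((Nd ((Nd (Lf (-1) (0) (-1) (-1) (1)) ((Nd (Lf (-1) (-1) (0)
    (1) (0)) (Lf (-1) (0) (-1) (0) (0)))))) ((Nd ((Nd (Lf (-1) (0) (-1) (0) (-1)) ((Nd ((Nd (Lf (-1) (0)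
    (-1) (0) (-1)) (Out))) ((Nd (Lf (-1) (0) (-1) (0) (-1)) ((Nd ((Nd (Lf (-1) (0) (-1) (0) (-1))
    (Out))) ((Nd (Lf (-1) (0) (-1) (0) (-1)) ((Nd (Out) (Lf (-1) (0) (-1) (0) (0)))))))))))))) (Lf (-1)
    (0) (-1) (0) (0)))))) ((Nd (Lf (-1) (-1) (1) (-1) (1)) (Lf (-1) (-1) (1) (0) (-1)))))))))) ((Nd
    (Out) ((Nd ((Nd ((Nd ((Nd (Out) ((Nd (Lf (-1) (0) (-1) (0) (0)) (Out))))) (Out))) ((Nd ((Nd ((Nd (Lf
    (-1) (0) (-1) (0) (0)) ((Nd ((Nd (Lf (-1) (0) (-1) (0) (0)) (Out))) (Lf (-1) (0) (0) (-1) (-1))))))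
    ((Nd (Lf (-1) (0) (-1) (0) (0)) (Lf (-1) (0) (0) (-1) (-1)))))) ((Nd (Out) (Lf (-1) (0) (0) (-1)
    (-1)))))))) (Out))))))) ((Nd ((Nd ((Nd (Out) ((Nd ((Nd (Out) ((Nd ((Nd (Lf (-1) (-1) (0) (1) (1))
    ((Nd (Lf (-1) (-1) (1) (0) (-1)) (Lf (-1) (0) (-1) (0) (1)))))) (Lf (-1) (-1) (1) (0) (0))))))
    (Out))))) (Out))) ((Nd ((Nd ((Nd (Lf (-1) (0) (-1) (1) (-1)) ((Nd (Lf (-1) (-1) (1) (0) (0)) (Lf
    (-1) (0) (0) (-1) (0)))))) ((Nd ((Nd ((Nd (Out) ((Nd ((Nd ((Nd (Lf (-1) (0) (0) (-1) (-1)) (Lf (0)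
    (-1) (-1) (-1) (-1)))) ((Nd (Lf (-1) (0) (0) (-1) (-1)) (Lf (0) (-1) (-1) (-1) (-1)))))) (Lf (0)
    (-1) (-1) (-1) (-1)))))) (Out))) ((Nd (Lf (-1) (0) (0) (-1) (0)) ((Nd (Lf (0) (-1) (-1) (-1) (-1))
    (Lf (0) (-1) (-1) (-1) (0)))))))))) ((Nd ((Nd (Lf (-1) (-1) (1) (0) (1)) ((Nd (Out) ((Nd (Lf (-1)
    (-1) (1) (0) (1)) (Out))))))) ((Nd ((Nd (Lf (-1) (0) (-1) (1) (0)) (Lf (0) (-1) (-1) (-1) (0)))) (Lf
    (-1) (0) (0) (-1) (1)))))))))))))))) ((Nd (Out) ((Nd ((Nd (Out) ((Nd ((Nd (Out) ((Nd ((Nd ((Nd (Lf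
    (0) (-1) (-1) (-1) (0)) (Out))) (Lf (0) (-1) (-1) (-1) (1)))) (Out))))) (Out))))) (Out))))))) ((Nd
    ((Nd ((Nd (Out) ((Nd ((Nd (Out) ((Nd ((Nd (Out) ((Nd ((Nd (Lf (-1) (-1) (1) (1) (0)) ((Nd ((Nd (Lf
    (-1) (0) (-1) (1) (1)) (Lf (-1) (0) (0) (0) (0)))) ((Nd (Lf (-1) (0) (-1) (1) (1)) (Lf (-1) (0) (0)
    (0) (0)))))))) ((Nd (Out) (Lf (-1) (-1) (1) (1) (1)))))))) (Out))))) (Out))))) (Out))) ((Nd ((Nd
    ((Nd ((Nd ((Nd ((Nd ((Nd ((Nd (Lf (-1) (0) (0) (0) (0)) ((Nd (Lf (-1) (1) (-1) (-1) (-1)) ((Nd (Lf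
    (-1) (0) (0) (0) (0)) (Lf (0) (-1) (-1) (0) (0)))))))) ((Nd ((Nd (Lf (-1) (0) (0) (0) (0)) ((Nd ((Nd
    (Lf (-1) (0) (0) (0) (0)) (Lf (-1) (0) (0) (0) (1)))) ((Nd (Lf (-1) (0) (0) (0) (0)) (Lf (-1) (0)
    (0) (0) (1)))))))) (Lf (-1) (0) (1) (-1) (-1)))))) ((Nd ((Nd ((Nd ((Nd (Lf (0) (-1) (-1) (0) (-1))
    (Out))) (Lf (0) (-1) (-1) (0) (0)))) (Out))) ((Nd (Lf (-1) (1) (-1) (-1) (0)) ((Nd ((Nd (Lf (0) (-1)
    (-1) (0) (0)) (Out))) (Lf (0) (-1) (0) (-1) (-1)))))))))) ((Nd ((Nd (Lf (-1) (0) (0) (0) (1)) ((Nd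
    (Out) ((Nd ((Nd ((Nd (Lf (-1) (0) (0) (0) (1)) (Out))) (Lf (-1) (0) (0) (1) (0)))) ((Nd (Out) (Lf
    (-1) (0) (0) (1) (0)))))))))) ((Nd ((Nd ((Nd (Lf (-1) (0) (1) (-1) (-1)) (Lf (-1) (0) (1) (-1)
    (0)))) (Lf (0) (-1) (-1) (1) (-1)))) (Lf (-1) (1) (-1) (-1) (1)))))))) ((Nd (Out) ((Nd ((Nd ((Nd (Lf
    (0) (-1) (-1) (1) (-1)) (Out))) (Lf (0) (-1) (0) (-1) (0)))) (Out))))))) ((Nd ((Nd ((Nd (Out) ((Nd
    ((Nd ((Nd (Lf (-1) (0) (0) (1) (0)) ((Nd (Out) (Lf (-1) (0) (1) (-1) (1)))))) (Lf (-1) (0) (1) (-1)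
    (1)))) ((Nd (Out) (Lf (-1) (0) (0) (1) (1)))))))) ((Nd (Out) ((Nd ((Nd (Out) ((Nd (Lf (-1) (0) (0)
    (1) (1)) (Out))))) (Out))))))) ((Nd ((Nd ((Nd ((Nd (Lf (0) (-1) (-1) (1) (0)) ((Nd (Lf (0) (-1) (0)
    (-1) (0)) (Lf (0) (-1) (0) (-1) (1)))))) ((Nd ((Nd (Lf (-1) (0) (1) (0) (-1)) (Lf (-1) (0) (1) (0)
    (0)))) (Lf (0) (-1) (0) (-1) (1)))))) ((Nd ((Nd ((Nd ((Nd ((Nd (Out) (Lf (0) (-1) (0) (0) (-1))))
    (Out))) (Lf (0) (-1) (0) (0) (-1)))) (Out))) ((Nd (Lf (-1) (1) (0) (-1) (-1)) (Lf (0) (0) (-1) (-1)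
    (-1)))))))) ((Nd ((Nd (Lf (-1) (0) (1) (0) (0)) ((Nd ((Nd ((Nd (Out) ((Nd (Lf (-1) (0) (1) (0) (0))
    ((Nd (Out) (Lf (-1) (0) (1) (0) (1)))))))) (Out))) (Lf (-1) (0) (1) (0) (1)))))) ((Nd (Lf (0) (-1)
    (0) (0) (0)) ((Nd (Lf (-1) (1) (-1) (1) (0)) ((Nd (Lf (0) (-1) (0) (0) (0)) (Lf (0) (-1) (0) (0)
    (1)))))))))))))))) ((Nd (Out) ((Nd ((Nd (Out) ((Nd ((Nd ((Nd ((Nd (Lf (0) (0) (-1) (-1) (-1)) (Lf
    (0) (0) (-1) (-1) (0)))) (Out))) (Lf (0) (0) (-1) (-1) (0)))) (Out))))) (Out))))))) ((Nd ((Nd ((Nd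
    (Out) ((Nd ((Nd ((Nd ((Nd (Out) ((Nd (Lf (-1) (0) (1) (0) (1)) (Out))))) (Out))) ((Nd ((Nd ((Nd (Lf
    (-1) (0) (1) (1) (-1)) ((Nd ((Nd (Lf (-1) (0) (1) (0) (1)) ((Nd (Out) (Lf (-1) (0) (1) (1) (0))))))
    (Lf (-1) (1) (-1) (1) (1)))))) (Lf (-1) (1) (0) (-1) (1)))) ((Nd ((Nd ((Nd (Out) (Lf (-1) (0) (1)
    (1) (0)))) (Out))) (Lf (-1) (0) (1) (1) (0)))))))) ((Nd (Out) ((Nd ((Nd (Out) ((Nd ((Nd (Out) ((Nd
    (Lf (-1) (0) (1) (1) (0)) (Lf (-1) (0) (1) (1) (1)))))) (Out))))) (Out))))))))) (Out))) ((Nd ((Nd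
    ((Nd ((Nd ((Nd ((Nd (Lf (-1) (1) (0) (0) (-1)) ((Nd ((Nd (Lf (0) (-1) (0) (1) (-1)) (Lf (0) (0) (-1)
    (0) (-1)))) (Lf (0) (-1) (1) (-1) (0)))))) ((Nd ((Nd ((Nd (Lf (-1) (1) (-1) (1) (1)) (Lf (0) (-1)
    (1) (-1) (0)))) (Lf (-1) (1) (0) (0) (0)))) (Lf (0) (-1) (1) (-1) (0)))))) ((Nd ((Nd (Lf (0) (0)
    (-1) (0) (-1)) (Out))) ((Nd (Lf (0) (0) (-1) (-1) (1)) ((Nd ((Nd (Lf (0) (0) (-1) (0) (-1)) (Out)))
    ((Nd ((Nd (Lf (0) (0) (-1) (0) (-1)) (Lf (0) (0) (-1) (0) (0)))) ((Nd ((Nd ((Nd ((Nd (Lf (0) (0)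
    (-1) (0) (-1)) (Out))) (Lf (0) (0) (-1) (0) (0)))) (Out))) (Lf (0) (0) (-1) (0) (0))))))))))))))
    ((Nd ((Nd (Lf (-1) (1) (0) (0) (0)) ((Nd (Lf (-1) (0) (1) (1) (1)) (Lf (-1) (1) (0) (0) (1))))))
    ((Nd (Lf (0) (-1) (1) (0) (-1)) ((Nd (Lf (-1) (1) (0) (1) (-1)) ((Nd (Lf (-1) (1) (1) (-1) (-1)) (Lf
    (0) (-1) (1) (0) (0)))))))))))) ((Nd (Out) ((Nd ((Nd ((Nd ((Nd ((Nd ((Nd ((Nd (Lf (0) (0) (-1) (0)
    (0)) (Out))) ((Nd (Lf (0) (0) (-1) (0) (0)) ((Nd ((Nd (Lf (0) (0) (-1) (0) (0)) (Out))) (Lf (0) (0)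
    (0) (-1) (-1)))))))) (Out))) (Lf (0) (0) (0) (-1) (-1)))) (Out))) (Lf (0) (0) (0) (-1) (-1))))
    (Out))))))) ((Nd ((Nd ((Nd ((Nd ((Nd (Out) ((Nd (Lf (-1) (1) (0) (0) (1)) (Out))))) (Out))) ((Nd
    ((Nd ((Nd (Lf (-1) (1) (0) (0) (1)) ((Nd ((Nd ((Nd (Out) ((Nd (Lf (-1) (1) (0) (0) (1)) ((Nd (Out)
    (Lf (-1) (1) (0) (1) (0)))))))) (Out))) (Lf (-1) (1) (0) (1) (0)))))) (Lf (-1) (1) (1) (-1) (0))))
    ((Nd ((Nd ((Nd (Out) (Lf (-1) (1) (0) (1) (0)))) (Out))) (Lf (-1) (1) (0) (1) (0)))))))) ((Nd (Out)
    ((Nd ((Nd (Out) ((Nd ((Nd (Out) (Lf (-1) (1) (1) (-1) (1)))) (Out))))) (Out))))))) ((Nd ((Nd ((Nd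
    ((Nd (Lf (0) (0) (-1) (0) (1)) (Lf (0) (0) (0) (-1) (0)))) (Lf (-1) (1) (1) (0) (-1)))) ((Nd ((Nd
    ((Nd (Lf (1) (-1) (-1) (-1) (-1)) ((Nd (Lf (0) (0) (0) (-1) (0)) ((Nd ((Nd (Lf (0) (0) (0) (-1) (0))
    (Lf (1) (-1) (-1) (-1) (0)))) ((Nd (Lf (0) (0) (0) (-1) (0)) (Lf (1) (-1) (-1) (-1) (0))))))))))
    ((Nd (Out) (Lf (1) (-1) (-1) (-1) (0)))))) ((Nd ((Nd ((Nd (Lf (0) (0) (0) (-1) (0)) ((Nd ((Nd (Lf
    (0) (0) (0) (-1) (0)) (Lf (1) (-1) (-1) (-1) (0)))) ((Nd (Lf (0) (0) (0) (-1) (0)) (Lf (1) (-1) (-1)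
    (-1) (0)))))))) (Lf (0) (0) (0) (0) (-1)))) (Lf (1) (-1) (-1) (-1) (0)))))))) ((Nd ((Nd ((Nd (Lf
    (-1) (1) (0) (1) (1)) ((Nd (Lf (-1) (1) (1) (0) (-1)) (Lf (0) (-1) (1) (1) (0)))))) ((Nd ((Nd (Lf
    (-1) (1) (0) (1) (1)) (Out))) (Lf (-1) (1) (1) (0) (0)))))) ((Nd (Lf (0) (0) (0) (0) (-1)) ((Nd (Lf
    (0) (0) (-1) (1) (1)) ((Nd ((Nd (Lf (0) (0) (0) (-1) (1)) (Lf (1) (-1) (-1) (-1) (1)))) (Lf (0) (0)
    (0) (0) (0)))))))))))))))))))))))) ((Nd (Out) ((Nd ((Nd (Out) ((Nd ((Nd (Out) ((Nd ((Nd ((Nd ((Nd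
    (Out) ((Nd (Lf (1) (-1) (-1) (-1) (0)) (Out))))) (Out))) ((Nd ((Nd ((Nd ((Nd ((Nd ((Nd (Lf (1) (-1)
    (-1) (-1) (0)) (Lf (1) (-1) (-1) (-1) (1)))) (Lf (1) (-1) (-1) (0) (-1)))) (Lf (1) (-1) (-1) (-1)
    (1)))) (Lf (1) (-1) (-1) (0) (-1)))) ((Nd (Lf (1) (-1) (-1) (-1) (1)) ((Nd (Lf (1) (-1) (-1) (0)
    (-1)) ((Nd (Lf (1) (-1) (-1) (-1) (1)) ((Nd (Lf (0) (1) (-1) (-1) (-1)) (Lf (1) (-1) (-1) (0)
    (0)))))))))))) ((Nd (Out) ((Nd ((Nd (Out) ((Nd ((Nd (Out) (Lf (1) (-1) (-1) (0) (0)))) (Out)))))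
    (Out))))))))) (Out))))) (Out))))) (Out))))))) ((Nd ((Nd ((Nd (Out) ((Nd ((Nd (Out) ((Nd ((Nd (Out)
    ((Nd ((Nd ((Nd ((Nd (Out) ((Nd ((Nd (Out) ((Nd (Lf (-1) (1) (1) (0) (0)) (Out))))) (Out))))) (Out)))
    ((Nd ((Nd ((Nd ((Nd ((Nd (Lf (-1) (1) (1) (0) (0)) (Lf (0) (-1) (1) (1) (1)))) (Lf (-1) (1) (1) (1)
    (-1)))) (Lf (-1) (1) (1) (0) (1)))) (Lf (-1) (1) (1) (1) (-1)))) ((Nd (Lf (-1) (1) (1) (0) (1)) ((Nd
    (Lf (-1) (1) (1) (1) (-1)) ((Nd (Lf (-1) (1) (1) (0) (1)) ((Nd (Lf (-1) (1) (1) (1) (-1)) (Lf (-1)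
    (1) (1) (1) (0)))))))))))))) ((Nd (Out) ((Nd ((Nd (Out) (Lf (-1) (1) (1) (1) (0)))) (Out)))))))))
    (Out))))) (Out))))) (Out))) ((Nd ((Nd ((Nd ((Nd ((Nd ((Nd ((Nd ((Nd ((Nd ((Nd ((Nd (Lf (0) (0) (0)
    (0) (0)) ((Nd (Lf (-1) (1) (1) (1) (-1)) (Lf (0) (0) (0) (1) (-1)))))) (Lf (0) (0) (1) (-1) (-1))))
    (Lf (0) (0) (0) (0) (1)))) ((Nd ((Nd (Lf (1) (-1) (-1) (0) (0)) ((Nd (Out) (Lf (1) (-1) (0) (-1)
    (-1)))))) ((Nd ((Nd (Lf (0) (1) (-1) (-1) (0)) (Lf (1) (-1) (-1) (0) (1)))) (Lf (1) (-1) (0) (-1)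
    (-1)))))))) ((Nd ((Nd ((Nd (Lf (-1) (1) (1) (1) (0)) ((Nd (Lf (0) (0) (0) (0) (1)) ((Nd ((Nd ((Nd
    (Lf (-1) (1) (1) (1) (0)) (Lf (0) (0) (0) (1) (0)))) ((Nd (Lf (-1) (1) (1) (1) (0)) (Lf (0) (0) (0)
    (1) (0)))))) (Lf (0) (0) (0) (1) (0)))))))) ((Nd ((Nd (Lf (-1) (1) (1) (1) (0)) (Out))) ((Nd ((Nd
    ((Nd ((Nd (Lf (-1) (1) (1) (1) (0)) (Lf (0) (0) (0) (1) (0)))) ((Nd (Lf (-1) (1) (1) (1) (0)) (Lf
    (0) (0) (0) (1) (0)))))) (Lf (0) (0) (0) (1) (0)))) (Lf (-1) (1) (1) (1) (1)))))))) ((Nd (Lf (1)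
    (-1) (-1) (0) (1)) ((Nd (Lf (0) (0) (0) (1) (0)) (Lf (0) (0) (1) (0) (-1)))))))))) ((Nd ((Nd ((Nd
    (Out) ((Nd ((Nd (Out) ((Nd (Lf (1) (-1) (-1) (1) (-1)) (Out))))) (Out))))) (Out))) ((Nd ((Nd ((Nd
    (Lf (1) (-1) (0) (-1) (0)) ((Nd (Out) ((Nd (Lf (1) (-1) (0) (-1) (0)) (Out))))))) ((Nd (Lf (1) (-1)
    (-1) (1) (0)) ((Nd ((Nd (Lf (1) (-1) (0) (-1) (0)) ((Nd (Out) ((Nd ((Nd ((Nd (Lf (1) (-1) (0) (-1)
    (0)) (Out))) (Lf (1) (-1) (0) (0) (-1)))) (Out))))))) (Lf (1) (-1) (0) (0) (-1)))))))) ((Nd (Out)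
    ((Nd ((Nd (Out) (Lf (1) (-1) (0) (0) (-1)))) (Out))))))))))) ((Nd ((Nd ((Nd (Out) ((Nd (Lf (0) (0)
    (0) (1) (1)) ((Nd (Out) ((Nd (Lf (0) (0) (0) (1) (1)) ((Nd (Out) ((Nd ((Nd ((Nd (Lf (0) (0) (0) (1)
    (1)) ((Nd (Out) (Lf (0) (0) (1) (0) (0)))))) (Lf (0) (0) (1) (0) (0)))) ((Nd (Out) (Lf (0) (0) (1)
    (0) (0)))))))))))))))) (Out))) ((Nd ((Nd ((Nd ((Nd ((Nd (Lf (0) (1) (-1) (0) (0)) (Lf (1) (-1) (-1)
    (1) (1)))) (Lf (1) (-1) (0) (-1) (1)))) (Lf (0) (1) (-1) (0) (1)))) ((Nd ((Nd (Lf (1) (-1) (0) (0)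
    (-1)) (Lf (1) (0) (-1) (-1) (-1)))) (Lf (1) (-1) (0) (0) (0)))))) ((Nd ((Nd ((Nd ((Nd ((Nd ((Nd (Lf
    (0) (0) (1) (0) (0)) ((Nd (Out) ((Nd (Lf (0) (0) (1) (0) (0)) ((Nd (Out) (Lf (0) (0) (1) (0)
    (1)))))))))) ((Nd (Lf (0) (0) (1) (0) (0)) (Lf (0) (0) (1) (0) (1)))))) ((Nd (Out) (Lf (0) (0) (1)
    (0) (1)))))) (Lf (0) (0) (1) (1) (-1)))) ((Nd (Out) (Lf (0) (0) (1) (0) (1)))))) ((Nd ((Nd (Lf (0)
    (1) (-1) (1) (0)) ((Nd (Lf (1) (-1) (0) (0) (0)) ((Nd (Lf (0) (1) (-1) (1) (0)) (Lf (1) (-1) (1)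
    (-1) (-1)))))))) ((Nd ((Nd (Lf (0) (1) (-1) (1) (0)) ((Nd (Lf (0) (0) (1) (0) (1)) (Lf (0) (1) (0)
    (-1) (1)))))) (Lf (1) (-1) (0) (0) (1)))))))))))))) ((Nd (Out) ((Nd ((Nd ((Nd ((Nd (Out) ((Nd ((Nd
    (Out) ((Nd ((Nd (Lf (1) (0) (-1) (-1) (-1)) (Lf (1) (0) (-1) (-1) (0)))) (Out))))) (Out))))) (Out)))
    ((Nd ((Nd ((Nd (Lf (1) (0) (-1) (-1) (0)) ((Nd (Out) ((Nd (Lf (1) (0) (-1) (-1) (0)) (Out)))))))
    ((Nd (Lf (1) (-1) (0) (1) (-1)) ((Nd ((Nd (Lf (1) (-1) (1) (-1) (-1)) ((Nd ((Nd (Lf (1) (0) (-1)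
    (-1) (0)) (Out))) (Lf (1) (0) (-1) (0) (-1)))))) (Lf (1) (0) (-1) (-1) (1)))))))) ((Nd (Out) ((Nd
    ((Nd (Out) (Lf (1) (0) (-1) (0) (-1)))) (Out))))))))) (Out))))))) ((Nd ((Nd ((Nd (Out) ((Nd ((Nd
    (Out) ((Nd (Lf (0) (0) (1) (1) (0)) ((Nd (Out) ((Nd (Lf (0) (0) (1) (1) (0)) (Lf (0) (0) (1) (1)
    (1)))))))))) (Out))))) (Out))) ((Nd ((Nd ((Nd ((Nd ((Nd ((Nd ((Nd (Lf (0) (1) (0) (0) (-1)) (Lf (0)
    (1) (0) (0) (0)))) (Lf (1) (-1) (1) (-1) (0)))) (Lf (0) (1) (0) (0) (0)))) ((Nd ((Nd (Lf (1) (0)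
    (-1) (0) (-1)) ((Nd (Out) ((Nd ((Nd ((Nd (Lf (1) (0) (-1) (0) (-1)) (Out))) (Lf (1) (0) (-1) (0)
    (0)))) (Out))))))) (Lf (1) (0) (-1) (0) (0)))))) ((Nd ((Nd ((Nd (Lf (0) (0) (1) (1) (1)) (Lf (1)
    (-1) (0) (1) (1)))) ((Nd (Out) ((Nd (Lf (0) (1) (0) (0) (1)) ((Nd (Out) ((Nd (Lf (0) (1) (0) (0)
    (1)) (Out))))))))))) ((Nd ((Nd (Lf (0) (1) (0) (1) (-1)) ((Nd (Lf (1) (0) (-1) (0) (0)) (Lf (1) (0)
    (-1) (0) (1)))))) ((Nd ((Nd (Lf (0) (1) (0) (1) (-1)) (Lf (0) (1) (0) (1) (0)))) (Lf (0) (1) (1)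
    (-1) (0)))))))))) ((Nd ((Nd ((Nd (Out) ((Nd ((Nd (Out) (Lf (1) (0) (0) (-1) (-1)))) (Out)))))
    (Out))) ((Nd ((Nd ((Nd (Lf (1) (0) (0) (-1) (-1)) (Out))) ((Nd (Lf (1) (0) (-1) (1) (-1)) ((Nd ((Nd
    (Lf (1) (0) (-1) (1) (-1)) (Out))) (Lf (1) (0) (0) (-1) (0)))))))) (Out))))))) ((Nd ((Nd ((Nd (Out)
    ((Nd (Lf (0) (1) (0) (1) (0)) ((Nd (Out) (Lf (0) (1) (1) (-1) (1)))))))) (Out))) ((Nd ((Nd ((Nd (Lf
    (1) (-1) (1) (1) (-1)) ((Nd (Lf (0) (1) (1) (-1) (1)) ((Nd (Lf (1) (0) (-1) (1) (0)) (Lf (1) (0)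
    (-1) (1) (1)))))))) ((Nd ((Nd ((Nd ((Nd (Lf (1) (0) (0) (-1) (0)) (Out))) ((Nd (Lf (1) (0) (0) (-1)
    (0)) ((Nd (Out) (Lf (1) (0) (0) (0) (-1)))))))) (Out))) (Lf (1) (0) (0) (0) (-1)))))) ((Nd ((Nd ((Nd
    ((Nd (Lf (0) (1) (0) (1) (1)) ((Nd (Out) (Lf (0) (1) (1) (0) (0)))))) (Lf (1) (-1) (1) (1) (0))))
    ((Nd (Out) ((Nd (Lf (0) (1) (1) (0) (0)) ((Nd (Out) (Lf (0) (1) (1) (0) (1)))))))))) ((Nd ((Nd (Lf
    (1) (0) (-1) (1) (1)) ((Nd ((Nd ((Nd (Lf (1) (0) (0) (0) (-1)) (Lf (1) (0) (0) (0) (0)))) ((Nd (Lf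
    (1) (0) (0) (0) (-1)) (Lf (1) (0) (0) (0) (0)))))) (Lf (1) (0) (0) (0) (0)))))) ((Nd ((Nd ((Nd (Lf
    (0) (1) (1) (0) (0)) (Lf (1) (0) (0) (0) (0)))) (Lf (1) (-1) (1) (1) (1)))) (Lf (1) (0) (0) (0)
    (0)))))))))))))))))) ((Nd (Out) ((Nd ((Nd (Out) ((Nd ((Nd (Out) ((Nd ((Nd ((Nd (Lf (1) (1) (-1) (-1)
    (-1)) (Out))) ((Nd ((Nd ((Nd (Lf (1) (0) (0) (0) (0)) (Lf (1) (0) (1) (-1) (-1)))) ((Nd (Lf (1) (0)
    (0) (0) (0)) (Lf (1) (0) (1) (-1) (-1)))))) (Lf (1) (1) (-1) (-1) (0)))))) (Out))))) (Out)))))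
    (Out))))))) ((Nd ((Nd ((Nd (Out) ((Nd ((Nd (Out) ((Nd ((Nd (Out) ((Nd (Lf (0) (1) (1) (1) (-1)) ((Nd
    (Out) (Lf (0) (1) (1) (1) (0)))))))) (Out))))) (Out))))) (Out))) ((Nd ((Nd ((Nd ((Nd ((Nd ((Nd ((Nd
    (Lf (1) (0) (0) (1) (-1)) ((Nd (Lf (0) (1) (1) (1) (0)) (Lf (1) (0) (1) (-1) (0)))))) ((Nd ((Nd ((Nd
    (Out) (Lf (1) (1) (-1) (0) (-1)))) (Out))) (Lf (1) (1) (-1) (0) (-1)))))) ((Nd ((Nd ((Nd ((Nd (Lf
    (0) (1) (1) (1) (0)) (Lf (0) (1) (1) (1) (1)))) (Lf (1) (0) (0) (1) (0)))) ((Nd (Out) ((Nd ((Nd (Lf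
    (0) (1) (1) (1) (1)) ((Nd ((Nd (Lf (0) (1) (1) (1) (1)) (Lf (1) (0) (0) (1) (1)))) ((Nd (Lf (0) (1)
    (1) (1) (1)) (Lf (1) (0) (0) (1) (1)))))))) (Out))))))) ((Nd ((Nd (Lf (1) (0) (0) (1) (0)) (Lf (1)
    (1) (-1) (0) (0)))) (Lf (1) (0) (1) (-1) (1)))))))) ((Nd (Out) ((Nd ((Nd (Out) ((Nd ((Nd (Lf (1) (1)
    (-1) (0) (0)) ((Nd ((Nd (Lf (1) (0) (1) (0) (-1)) (Lf (1) (1) (-1) (0) (1)))) (Lf (1) (1) (0) (-1)
    (-1)))))) (Out))))) (Out))))))) ((Nd ((Nd ((Nd (Out) ((Nd ((Nd ((Nd (Lf (1) (0) (0) (1) (1)) (Out)))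
    ((Nd ((Nd (Lf (1) (0) (0) (1) (1)) (Lf (1) (0) (1) (0) (0)))) ((Nd ((Nd (Lf (1) (0) (0) (1) (1))
    ((Nd (Out) (Lf (1) (0) (1) (0) (0)))))) (Lf (1) (0) (1) (0) (0)))))))) ((Nd (Out) ((Nd ((Nd (Out)
    (Lf (1) (0) (1) (0) (0)))) (Out))))))))) (Out))) ((Nd ((Nd ((Nd ((Nd (Lf (1) (1) (-1) (0) (1)) (Lf
    (1) (1) (-1) (1) (-1)))) ((Nd ((Nd (Lf (1) (0) (1) (0) (0)) ((Nd ((Nd ((Nd ((Nd ((Nd ((Nd (Lf (1)
    (0) (1) (0) (0)) (Out))) (Lf (1) (0) (1) (0) (1)))) ((Nd (Out) (Lf (1) (0) (1) (0) (1)))))) (Lf (1)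
    (0) (1) (0) (1)))) ((Nd (Out) (Lf (1) (0) (1) (0) (1)))))) (Lf (1) (0) (1) (0) (1)))))) ((Nd ((Nd
    (Lf (1) (0) (1) (0) (0)) (Lf (1) (1) (0) (-1) (0)))) (Lf (1) (0) (1) (1) (-1)))))))) ((Nd (Out) ((Nd
    (Lf (1) (1) (0) (-1) (0)) (Out))))))) ((Nd ((Nd ((Nd ((Nd ((Nd (Out) (Lf (1) (0) (1) (0) (1))))
    (Out))) (Lf (1) (0) (1) (0) (1)))) ((Nd (Out) ((Nd ((Nd (Out) (Lf (1) (0) (1) (1) (0)))) (Out)))))))
    ((Nd (Lf (1) (1) (0) (-1) (1)) (Lf (1) (1) (-1) (1) (1)))))))))))) ((Nd (Out) ((Nd ((Nd (Out) ((Nd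
    ((Nd (Out) ((Nd ((Nd (Out) (Lf (1) (1) (0) (0) (0)))) (Out))))) (Out))))) (Out))))))) ((Nd ((Nd ((Nd
    (Out) ((Nd ((Nd (Out) ((Nd ((Nd ((Nd (Lf (1) (0) (1) (1) (0)) (Out))) ((Nd (Lf (1) (1) (-1) (1) (1))
    (Lf (1) (0) (1) (1) (1)))))) ((Nd (Out) (Lf (1) (0) (1) (1) (1)))))))) (Out))))) (Out))) ((Nd ((Nd
    ((Nd ((Nd ((Nd ((Nd (Lf (1) (1) (0) (0) (0)) (Out))) ((Nd ((Nd ((Nd (Lf (1) (0) (1) (1) (1)) ((Nd
    (Lf (1) (1) (0) (0) (0)) (Lf (1) (1) (0) (0) (1)))))) ((Nd (Lf (1) (0) (1) (1) (1)) (Lf (1) (1) (0)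
    (0) (1)))))) (Lf (1) (1) (0) (1) (-1)))))) (Out))) ((Nd ((Nd ((Nd ((Nd ((Nd (Out) (Lf (1) (1) (0)
    (0) (1)))) (Out))) ((Nd (Lf (1) (1) (0) (0) (1)) ((Nd ((Nd (Lf (1) (1) (0) (0) (1)) ((Nd (Out) ((Nd
    (Lf (1) (1) (0) (0) (1)) (Out))))))) ((Nd (Lf (1) (1) (0) (0) (1)) ((Nd ((Nd (Lf (1) (1) (0) (0)
    (1)) ((Nd ((Nd (Lf (1) (1) (0) (0) (1)) (Out))) (Lf (1) (1) (0) (1) (0)))))) (Lf (1) (1) (0) (1)
    (0)))))))))))) ((Nd (Out) ((Nd ((Nd (Out) ((Nd ((Nd ((Nd ((Nd (Out) (Lf (1) (1) (0) (1) (0))))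
    (Out))) (Lf (1) (1) (0) (1) (0)))) ((Nd (Out) (Lf (1) (1) (0) (1) (0)))))))) (Out))))))) ((Nd (Lf
    (1) (1) (1) (-1) (0)) (Lf (1) (1) (0) (1) (0)))))))) (Out))) ((Nd ((Nd ((Nd (Out) ((Nd ((Nd ((Nd
    ((Nd (Out) ((Nd (Lf (1) (1) (0) (1) (0)) (Out))))) (Out))) (Lf (1) (1) (1) (-1) (1)))) ((Nd (Out)
    (Lf (1) (1) (0) (1) (1)))))))) (Out))) ((Nd ((Nd ((Nd ((Nd (Lf (1) (1) (1) (0) (-1)) (Out))) ((Nd
    ((Nd ((Nd (Lf (1) (1) (0) (1) (1)) (Lf (1) (1) (1) (0) (0)))) ((Nd (Lf (1) (1) (0) (1) (1)) (Lf (1)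
    (1) (1) (0) (0)))))) (Lf (1) (1) (1) (0) (0)))))) (Out))) ((Nd ((Nd ((Nd ((Nd ((Nd (Out) (Lf (1) (1)
    (1) (0) (0)))) (Out))) ((Nd (Lf (1) (1) (1) (0) (0)) (Lf (1) (1) (1) (0) (1)))))) ((Nd (Out) (Lf (1)
    (1) (1) (0) (1)))))) ((Nd ((Nd ((Nd (Out) (Lf (1) (1) (1) (1) (-1)))) (Out))) ((Nd (Lf (1) (1) (1)
    (0) (1)) (Out))))))))))))))))))))))))"

lemma big_ok: "check bigtree (-31744) 31744 (-25600) 25600"
  unfolding bigtree_def by code_simp

theorem lemma4p2:
  shows "Tinv_pow 1 bvec - Tinv_pow 2 bvec - Tinv_pow 3 bvec - Tinv_pow 4 bvec
           + Tinv_pow 5 bvec \<in> Vset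
         \<and> Uset \<subseteq> (\<Union>u1\<in>{-1,0,1}. \<Union>u2\<in>{-1,0,1}. \<Union>u3\<in>{-1,0,1}. \<Union>u4\<in>{-1,0,1}.
                      \<Union>u5\<in>{-1,0,1}.
                        (affT u1 \<circ> affT u2 \<circ> affT u3 \<circ> affT u4 \<circ> affT u5) ` Vset)"
proof (intro conjI subsetI)
  show "Tinv_pow 1 bvec - Tinv_pow 2 bvec - Tinv_pow 3 bvec - Tinv_pow 4 bvec
           + Tinv_pow 5 bvec \<in> Vset" by (rule v_in_V)
next
  fix x assume "x \<in> Uset"
  then show "x \<in> (\<Union>u1\<in>{-1,0,1}. \<Union>u2\<in>{-1,0,1}. \<Union>u3\<in>{-1,0,1}. \<Union>u4\<in>{-1,0,1}.
                      \<Union>u5\<in>{-1,0,1}.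
                        (affT u1 \<circ> affT u2 \<circ> affT u3 \<circ> affT u4 \<circ> affT u5) ` Vset)"
    by (rule cover_pt[OF big_ok])
qed

end
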